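(* For any tight cut $\partial(X)$ of a connected bipartite cubic graph $H$, with $H_1:=H/\overline{X}\rightarrow\overline{x}$ and $H_2:=H/X\rightarrow x$, \[\rho(H)=\rho(H_1)-\rho_{H_1}(\overline{x})+\rho(H_2)-\rho_{H_2}(x)+\rho_{H_1}(\overline{x})\,\rho_{H_2}(x).\]
   Context: Graphs are loopless but may have parallel edges. A cut $C$ of a matching covered graph is tight if $|C\cap M|=1$ for every perfect matching $M$. $H/\overline{X}\rightarrow\overline{x}$ is $H$ with $\overline{X}=V(H)-X$ shrunk to a single vertex $\overline{x}$, and $H/X\rightarrow x$ is analogous. For a connected bipartite cubic graph $H[A,B]$, a pair $(a,b)$ with $a\in A$, $b\in B$ is $\lambda$-matchable if $H$ has a spanning subgraph in which $a,b$ have degree $3$ and every other vertex degree $1$; $\rho(H)$ is the number of such pairs, and for a vertex $u$, $\rho_H(u)$ is the number of vertices $w$ such that the pair formed by $u$ and $w$ is $\lambda$-matchable. *)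

theory Defs
  imports Main
begin

text \<open>A loopless multigraph is given by a vertex set V, an edge set E (edge identifiers,
so parallel edges are allowed) and an endpoint map ends, each edge having exactly two
distinct endpoints in V.\<close>

definition mgraph :: "'v set \<Rightarrow> 'e set \<Rightarrow> ('e \<Rightarrow> 'v set) \<Rightarrow> bool" where
  "mgraph V E ends \<longleftrightarrow> finite V \<and> finite E \<and>
     (\<forall>e\<in>E. ends e \<subseteq> V \<and> card (ends e) = 2)"

definition deg :: "'e set \<Rightarrow> ('e \<Rightarrow> 'v set) \<Rightarrow> 'v \<Rightarrow> nat" where
  "deg F ends v = card {e\<in>F. v \<in> ends e}"

definition cubic :: "'v set \<Rightarrow> 'e set \<Rightarrow> ('e \<Rightarrow> 'v set) \<Rightarrow> bool" where
  "cubic V E ends \<longleftrightarrow> (\<forall>v\<in>V. deg E ends v = 3)"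

definition adj :: "'e set \<Rightarrow> ('e \<Rightarrow> 'v set) \<Rightarrow> ('v \<times> 'v) set" where
  "adj E ends = {(u, w). \<exists>e\<in>E. ends e = {u, w}}"

definition connected_graph :: "'v set \<Rightarrow> 'e set \<Rightarrow> ('e \<Rightarrow> 'v set) \<Rightarrow> bool" where
  "connected_graph V E ends \<longleftrightarrow> V \<noteq> {} \<and> (\<forall>u\<in>V. \<forall>w\<in>V. (u, w) \<in> (adj E ends)\<^sup>*)"

definition bipartition :: "'v set \<Rightarrow> 'e set \<Rightarrow> ('e \<Rightarrow> 'v set) \<Rightarrow> 'v set \<Rightarrow> 'v set \<Rightarrow> bool" where
  "bipartition V E ends A B \<longleftrightarrow> A \<union> B = V \<and> A \<inter> B = {} \<and>
     (\<forall>e\<in>E. card (ends e \<inter> A) = 1 \<and> card (ends e \<inter> B) = 1)"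

definition bipartite :: "'v set \<Rightarrow> 'e set \<Rightarrow> ('e \<Rightarrow> 'v set) \<Rightarrow> bool" where
  "bipartite V E ends \<longleftrightarrow> (\<exists>A B. bipartition V E ends A B)"

definition perfect_matching :: "'v set \<Rightarrow> 'e set \<Rightarrow> ('e \<Rightarrow> 'v set) \<Rightarrow> 'e set \<Rightarrow> bool" where
  "perfect_matching V E ends M \<longleftrightarrow> M \<subseteq> E \<and> (\<forall>v\<in>V. deg M ends v = 1)"

definition cut :: "'e set \<Rightarrow> ('e \<Rightarrow> 'v set) \<Rightarrow> 'v set \<Rightarrow> 'e set" where
  "cut E ends X = {e\<in>E. card (ends e \<inter> X) = 1}"

definition tight_cut :: "'v set \<Rightarrow> 'e set \<Rightarrow> ('e \<Rightarrow> 'v set) \<Rightarrow> 'v set \<Rightarrow> bool" where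
  "tight_cut V E ends X \<longleftrightarrow>
     (\<forall>M. perfect_matching V E ends M \<longrightarrow> card (cut E ends X \<inter> M) = 1)"

text \<open>Shrinking a vertex set S to a single new vertex (None); other vertices v become Some v.
Edges with both ends in S (which would become loops) are deleted.\<close>
definition shrink_map :: "'v set \<Rightarrow> 'v \<Rightarrow> 'v option" where
  "shrink_map S v = (if v \<in> S then None else Some v)"

definition shrinkV :: "'v set \<Rightarrow> 'v set \<Rightarrow> 'v option set" where
  "shrinkV V S = Some ` (V - S) \<union> {None}"

definition shrinkE :: "'e set \<Rightarrow> ('e \<Rightarrow> 'v set) \<Rightarrow> 'v set \<Rightarrow> 'e set" where
  "shrinkE E ends S = {e\<in>E. ends e - S \<noteq> {}}"

definition shrink_ends :: "('e \<Rightarrow> 'v set) \<Rightarrow> 'v set \<Rightarrow> 'e \<Rightarrow> 'v option set" where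
  "shrink_ends ends S e = shrink_map S ` ends e"

definition lam_matchable :: "'v set \<Rightarrow> 'e set \<Rightarrow> ('e \<Rightarrow> 'v set) \<Rightarrow> 'v \<Rightarrow> 'v \<Rightarrow> bool" where
  "lam_matchable V E ends a b \<longleftrightarrow> a \<in> V \<and> b \<in> V \<and>
     (\<exists>F\<subseteq>E. deg F ends a = 3 \<and> deg F ends b = 3 \<and> (\<forall>v\<in>V - {a, b}. deg F ends v = 1))"

text \<open>The bipartition (A,B) of a connected bipartite graph is unique up to swapping the
sides; the counts below are invariant under the swap.\<close>
definition sides :: "'v set \<Rightarrow> 'e set \<Rightarrow> ('e \<Rightarrow> 'v set) \<Rightarrow> 'v set \<times> 'v set" where
  "sides V E ends = (SOME p. bipartition V E ends (fst p) (snd p))"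

definition rho :: "'v set \<Rightarrow> 'e set \<Rightarrow> ('e \<Rightarrow> 'v set) \<Rightarrow> nat" where
  "rho V E ends = (let (A, B) = sides V E ends in
     card {(a, b). a \<in> A \<and> b \<in> B \<and> lam_matchable V E ends a b})"

definition rho_v :: "'v set \<Rightarrow> 'e set \<Rightarrow> ('e \<Rightarrow> 'v set) \<Rightarrow> 'v \<Rightarrow> nat" where
  "rho_v V E ends u = (let (A, B) = sides V E ends in
     card {w. ((u \<in> A \<and> w \<in> B \<and> lam_matchable V E ends u w) \<or>
               (u \<in> B \<and> w \<in> A \<and> lam_matchable V E ends w u))})"

end

theory Submission
  imports Defs
begin

lemma hall:
  fixes R :: "'a \<Rightarrow> 'b set"
  assumes "finite S" "\<forall>s\<in>S. finite (R s)" "\<forall>S'\<subseteq>S. card S' \<le> card (\<Union>(R ` S'))"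
  shows "\<exists>f. inj_on f S \<and> (\<forall>s\<in>S. f s \<in> R s)"
  using assms
proof (induction "card S" arbitrary: S R rule: less_induct)
  case less
  show ?case
  proof (cases "S = {}")
    case True then show ?thesis by auto
  next
    case False
    show ?thesis
    proof (cases "\<exists>S'. S' \<subseteq> S \<and> S' \<noteq> {} \<and> S' \<noteq> S \<and> card (\<Union>(R ` S')) = card S'")
      case True
      then obtain S' where S': "S' \<subseteq> S" "S' \<noteq> {}" "S' \<noteq> S" "card (\<Union>(R ` S')) = card S'" by blast
      have fS': "finite S'" using S'(1) less.prems(1) finite_subset by blast
      have lt1: "card S' < card S" using S' less.prems(1) by (meson psubsetI psubset_card_mono)
      obtain f1 where f1: "inj_on f1 S'" "\<forall>s\<in>S'. f1 s \<in> R s"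
        using less.hyps[OF lt1 fS', of R] less.prems(2,3) S'(1) by auto
      define U where "U = \<Union>(R ` S')"
      define R' where "R' = (\<lambda>s. R s - U)"
      have "card S' > 0" using fS' S'(2) by auto
      hence lt2: "card (S - S') < card S" using S' less.prems(1) lt1
        by (simp add: card_Diff_subset fS')
      have cond: "\<forall>S''\<subseteq>S - S'. card S'' \<le> card (\<Union>(R' ` S''))"
      proof (intro allI impI)
        fix S'' assume h: "S'' \<subseteq> S - S'"
        have fS'': "finite S''" using h less.prems(1) finite_subset by blast
        have fU: "finite (\<Union>(R ` (S''\<union>S')))" using fS'' fS' less.prems(2) h S'(1) by auto
        have eq: "\<Union>(R' ` S'') = \<Union>(R ` (S'' \<union> S')) - U" by (auto simp: R'_def U_def)
        have sub: "U \<subseteq> \<Union>(R ` (S'' \<union> S'))" by (auto simp: U_def)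
        have c1: "card (\<Union>(R' ` S'')) = card (\<Union>(R ` (S'' \<union> S'))) - card U"
          using eq sub fU by (simp add: card_Diff_subset finite_subset)
        have c2: "card (S'' \<union> S') \<le> card (\<Union>(R ` (S'' \<union> S')))" proof -
          have "S'' \<union> S' \<subseteq> S" using h S'(1) by auto
          thus ?thesis using less.prems(3) by blast
        qed
        have c3: "card (S'' \<union> S') = card S'' + card S'"
          using h fS'' fS' by (subst card_Un_disjoint) auto
        show "card S'' \<le> card (\<Union>(R' ` S''))" using c1 c2 c3 S'(4) U_def by simp
      qed
      have fin2: "finite (S - S')" using less.prems(1) by auto
      have "\<forall>s\<in>S - S'. finite (R' s)" using less.prems(2) by (auto simp: R'_def)
      then obtain f2 where f2: "inj_on f2 (S - S')" "\<forall>s\<in>S-S'. f2 s \<in> R' s"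
        using less.hyps[OF lt2 fin2, of R'] cond by auto
      define f where "f = (\<lambda>s. if s \<in> S' then f1 s else f2 s)"
      have "inj_on f S"
      proof (rule inj_onI)
        fix x y assume xy: "x \<in> S" "y \<in> S" "f x = f y"
        show "x = y"
        proof (cases "x \<in> S'")
          case True
          show ?thesis
          proof (cases "y \<in> S'")
            case True
            then show ?thesis using \<open>x \<in> S'\<close> xy f1(1) by (auto simp: f_def inj_on_def)
          next
            case False
            have "f x \<in> U" using True f1(2) by (auto simp: f_def U_def)
            moreover have "f y \<notin> U" using False f2(2) xy(2) by (auto simp: f_def R'_def)
            ultimately show ?thesis using xy by simp
          qed
        next
          case False
          show ?thesis
          proof (cases "y \<in> S'")
            case True
            have "f y \<in> U" using True f1(2) by (auto simp: f_def U_def)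
            moreover have "f x \<notin> U" using False f2(2) xy(1) by (auto simp: f_def R'_def)
            ultimately show ?thesis using xy by simp
          next
            case False
            then show ?thesis using \<open>x \<notin> S'\<close> xy f2(1) by (auto simp: f_def inj_on_def)
          qed
        qed
      qed
      moreover have "\<forall>s\<in>S. f s \<in> R s" using f1(2) f2(2) by (auto simp: f_def R'_def)
      ultimately show ?thesis by blast
    next
      case noTight: False
      obtain s0 where s0: "s0 \<in> S" using False by blast
      have "card {s0} \<le> card (\<Union>(R ` {s0}))" using less.prems(3) s0 by blast
      hence "R s0 \<noteq> {}" by auto
      then obtain t0 where t0: "t0 \<in> R s0" by blast
      define R' where "R' = (\<lambda>s. R s - {t0})"
      have lt: "card (S - {s0}) < card S" using s0 less.prems(1) by (meson card_Diff1_less)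
      have cond: "\<forall>S''\<subseteq>S - {s0}. card S'' \<le> card (\<Union>(R' ` S''))"
      proof (intro allI impI)
        fix S'' assume h: "S'' \<subseteq> S - {s0}"
        show "card S'' \<le> card (\<Union>(R' ` S''))"
        proof (cases "S'' = {}")
          case True then show ?thesis by simp
        next
          case False
          have ge: "card S'' \<le> card (\<Union>(R ` S''))" using less.prems(3) h by auto
          have ne: "card (\<Union>(R ` S'')) \<noteq> card S''" using noTight h False s0 by blast
          have eq: "\<Union>(R' ` S'') = \<Union>(R ` S'') - {t0}" by (auto simp: R'_def)
          show ?thesis using ge ne unfolding eq by (auto simp: card_Diff_singleton_if)
        qed
      qed
      have fin2: "finite (S - {s0})" using less.prems(1) by auto
      have "\<forall>s\<in>S - {s0}. finite (R' s)" using less.prems(2) by (auto simp: R'_def)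
      then obtain f2 where f2: "inj_on f2 (S - {s0})" "\<forall>s\<in>S-{s0}. f2 s \<in> R' s"
        using less.hyps[OF lt fin2, of R'] cond by auto
      define f where "f = f2(s0 := t0)"
      have "inj_on f S"
      proof (rule inj_onI)
        fix x y assume xy: "x \<in> S" "y \<in> S" "f x = f y"
        show "x = y"
          using xy f2 by (auto simp: f_def R'_def inj_on_def split: if_splits)
      qed
      moreover have "\<forall>s\<in>S. f s \<in> R s" using f2(2) t0 by (auto simp: f_def R'_def)
      ultimately show ?thesis by blast
    qed
  qed
qed


lemma sum_deg:
  assumes "finite F" "finite W" "\<forall>e\<in>F. card (ends e \<inter> W) \<le> 1" "\<forall>e\<in>F. finite (ends e)"
  shows "(\<Sum>v\<in>W. deg F ends v) = card {e\<in>F. ends e \<inter> W \<noteq> {}}"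
proof -
  have eq: "{e\<in>F. ends e \<inter> W \<noteq> {}} = (\<Union>v\<in>W. {e\<in>F. v \<in> ends e})" by auto
  have disj: "\<forall>v\<in>W. \<forall>w\<in>W. v \<noteq> w \<longrightarrow> {e\<in>F. v \<in> ends e} \<inter> {e\<in>F. w \<in> ends e} = {}"
  proof (intro ballI impI)
    fix v w assume h: "v \<in> W" "w \<in> W" "v \<noteq> w"
    show "{e\<in>F. v \<in> ends e} \<inter> {e\<in>F. w \<in> ends e} = {}"
    proof (rule ccontr)
      assume "{e\<in>F. v \<in> ends e} \<inter> {e\<in>F. w \<in> ends e} \<noteq> {}"
      then obtain e where e: "e \<in> F" "v \<in> ends e" "w \<in> ends e" by blast
      have "{v, w} \<subseteq> ends e \<inter> W" using e h by auto
      hence "card {v, w} \<le> card (ends e \<inter> W)" using assms(4) e(1) by (meson card_mono finite_Int)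
      thus False using h(3) assms(3) e(1) by fastforce
    qed
  qed
  show ?thesis unfolding eq deg_def
    by (subst card_UN_disjoint) (use assms disj in auto)
qed

locale cbg =
  fixes V :: "'v set" and E :: "'e set" and ends :: "'e \<Rightarrow> 'v set" and A B :: "'v set"
  assumes mg: "mgraph V E ends" and bp: "bipartition V E ends A B" and cub: "cubic V E ends"
begin

lemma finV: "finite V" and finE: "finite E" and ends_sub: "e \<in> E \<Longrightarrow> ends e \<subseteq> V"
  and card_ends: "e \<in> E \<Longrightarrow> card (ends e) = 2"
  using mg by (auto simp: mgraph_def)

lemma fin_ends: "e \<in> E \<Longrightarrow> finite (ends e)"
  using card_ends by (metis card.infinite zero_neq_numeral)

lemma VAB: "V = A \<union> B" and ABdisj: "A \<inter> B = {}"
  using bp by (auto simp: bipartition_def)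

lemma finA: "finite A" and finB: "finite B" using VAB finV by auto

lemma deg3: "v \<in> V \<Longrightarrow> deg E ends v = 3" using cub by (auto simp: cubic_def)

lemma ends_AB: assumes "e \<in> E" shows "\<exists>x y. ends e = {x, y} \<and> x \<in> A \<and> y \<in> B"
proof -
  have "card (ends e \<inter> A) = 1" "card (ends e \<inter> B) = 1" using bp assms by (auto simp: bipartition_def)
  then obtain x y where x: "ends e \<inter> A = {x}" and y: "ends e \<inter> B = {y}"
    by (metis card_1_singletonE)
  have "ends e = (ends e \<inter> A) \<union> (ends e \<inter> B)" using ends_sub[OF assms] VAB by auto
  hence "ends e = {x, y}" using x y by auto
  moreover have "x \<in> A" "y \<in> B" using x y by auto
  ultimately show ?thesis by blast
qed

lemma cbg_swap: "cbg V E ends B A"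
  using mg bp cub by (unfold_locales) (auto simp: bipartition_def)

lemma sumdeg_A: assumes "W \<subseteq> A" "F \<subseteq> E"
  shows "(\<Sum>v\<in>W. deg F ends v) = card {e\<in>F. ends e \<inter> W \<noteq> {}}"
proof (rule sum_deg)
  show "finite F" using assms finE finite_subset by blast
  show "finite W" using assms finA finite_subset by blast
  show "\<forall>e\<in>F. finite (ends e)" using assms fin_ends by auto
  show "\<forall>e\<in>F. card (ends e \<inter> W) \<le> 1"
  proof
    fix e assume "e \<in> F"
    hence "e \<in> E" using assms by auto
    hence "card (ends e \<inter> A) = 1" using bp by (auto simp: bipartition_def)
    moreover have "card (ends e \<inter> W) \<le> card (ends e \<inter> A)"
      using assms(1) fin_ends[OF \<open>e \<in> E\<close>] by (intro card_mono) auto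
    ultimately show "card (ends e \<inter> W) \<le> 1" by simp
  qed
qed

lemma sumdeg_B: assumes "W \<subseteq> B" "F \<subseteq> E"
  shows "(\<Sum>v\<in>W. deg F ends v) = card {e\<in>F. ends e \<inter> W \<noteq> {}}"
  using cbg.sumdeg_A[OF cbg_swap] assms .

lemma sum3: "W \<subseteq> V \<Longrightarrow> (\<Sum>v\<in>W. deg E ends v) = 3 * card W"
  using deg3 by (simp add: subset_iff)

lemma sumA_all: "F \<subseteq> E \<Longrightarrow> (\<Sum>v\<in>A. deg F ends v) = card F"
proof -
  assume F: "F \<subseteq> E"
  have "{e\<in>F. ends e \<inter> A \<noteq> {}} = F"
  proof safe
    fix e assume "e \<in> F" "ends e \<inter> A = {}"
    thus False using ends_AB[of e] F by auto
  qed
  thus ?thesis using sumdeg_A[OF subset_refl F] by simp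
qed

lemma sumB_all: "F \<subseteq> E \<Longrightarrow> (\<Sum>v\<in>B. deg F ends v) = card F"
  using cbg.sumA_all[OF cbg_swap] .

lemma cardAB: "card A = card B"
  using sumA_all[of E] sumB_all[of E] sum3[of A] sum3[of B] VAB by auto

lemma MC: assumes c: "c \<in> E" shows "\<exists>M. perfect_matching V E ends M \<and> c \<in> M"
proof -
  obtain a b where ab: "ends c = {a, b}" "a \<in> A" "b \<in> B" using ends_AB[OF c] by blast
  define R where "R = (\<lambda>s. {w \<in> B - {b}. \<exists>e\<in>E. ends e = {s, w}})"
  have hallc: "\<forall>S'\<subseteq>A - {a}. card S' \<le> card (\<Union>(R ` S'))"
  proof (intro allI impI)
    fix S' assume S': "S' \<subseteq> A - {a}"
    define N0 where "N0 = {w\<in>B. \<exists>e\<in>E. \<exists>s\<in>S'. ends e = {s, w}}"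
    have UR: "\<Union>(R ` S') = N0 - {b}" by (auto simp: R_def N0_def)
    define ES where "ES = {e\<in>E. ends e \<inter> S' \<noteq> {}}"
    define EN where "EN = {e\<in>E. ends e \<inter> N0 \<noteq> {}}"
    have cES: "card ES = 3 * card S'" unfolding ES_def
      using sumdeg_A[of S' E] sum3[of S'] S' VAB by (metis Diff_subset le_supI1 order_trans subset_refl)
    have N0B: "N0 \<subseteq> B" by (auto simp: N0_def)
    have cEN: "card EN = 3 * card N0" unfolding EN_def
      using sumdeg_B[of N0 E] sum3[of N0] N0B VAB by auto
    have sub: "ES \<subseteq> EN"
    proof
      fix e assume "e \<in> ES"
      hence e: "e \<in> E" "ends e \<inter> S' \<noteq> {}" by (auto simp: ES_def)
      obtain x y where xy: "ends e = {x, y}" "x \<in> A" "y \<in> B" using ends_AB[OF e(1)] by blast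
      have "x \<in> S'" using e(2) xy S' ABdisj by auto
      hence "y \<in> N0" using xy e(1) by (auto simp: N0_def)
      thus "e \<in> EN" using xy e(1) by (auto simp: EN_def)
    qed
    have finEN: "finite EN" using finE by (auto simp: EN_def)
    have le: "card S' \<le> card N0" using card_mono[OF finEN sub] cES cEN by simp
    show "card S' \<le> card (\<Union>(R ` S'))"
    proof (cases "b \<in> N0")
      case False
      then show ?thesis using UR le by simp
    next
      case True
      show ?thesis
      proof (cases "card S' < card N0")
        case True
        then show ?thesis using UR \<open>b \<in> N0\<close> by (simp add: card_Diff_singleton_if)
      next
        case False
        hence "card ES = card EN" using le cES cEN by simp
        hence "ES = EN" using card_subset_eq[OF finEN sub] by simp
        moreover have "c \<in> EN" using \<open>b \<in> N0\<close> ab c by (auto simp: EN_def)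
        ultimately have "ends c \<inter> S' \<noteq> {}" by (auto simp: ES_def)
        thus ?thesis using ab S' ABdisj by auto
      qed
    qed
  qed
  have finAa: "finite (A - {a})" using finA by auto
  have "\<forall>s\<in>A - {a}. finite (R s)" using finB by (auto simp: R_def)
  then obtain f where f: "inj_on f (A - {a})" "\<forall>s\<in>A - {a}. f s \<in> R s"
    using hall[OF finAa _ hallc] by blast
  have fB: "f ` (A - {a}) \<subseteq> B - {b}" using f(2) by (auto simp: R_def)
  have "card (f ` (A - {a})) = card (B - {b})"
    using card_image[OF f(1)] cardAB ab finA finB by (simp add: card_Diff_singleton_if)
  hence fonto: "f ` (A - {a}) = B - {b}" using card_subset_eq[OF _ fB] finB by simp
  define ed where "ed = (\<lambda>s. SOME e. e \<in> E \<and> ends e = {s, f s})"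
  have ed: "ed s \<in> E \<and> ends (ed s) = {s, f s}" if "s \<in> A - {a}" for s
  proof -
    have "\<exists>e. e \<in> E \<and> ends e = {s, f s}" using f(2) that by (auto simp: R_def)
    thus ?thesis unfolding ed_def by (rule someI_ex)
  qed
  define M where "M = insert c (ed ` (A - {a}))"
  have "M \<subseteq> E" using c ed by (auto simp: M_def)
  moreover have "\<forall>v\<in>V. deg M ends v = 1"
  proof
    fix v assume v: "v \<in> V"
    have "\<exists>e0. {e\<in>M. v \<in> ends e} = {e0}"
    proof (cases "v = a \<or> v = b")
      case True
      have "{e\<in>M. v \<in> ends e} = {c}"
      proof safe
        fix e assume "e \<in> M" "v \<in> ends e"
        show "e = c"
        proof (rule ccontr)
          assume "e \<noteq> c"
          then obtain s where s: "s \<in> A - {a}" "e = ed s" using \<open>e \<in> M\<close> by (auto simp: M_def)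
          have "f s \<in> B - {b}" using fB s(1) by auto
          thus False using ed[OF s(1)] s True \<open>v \<in> ends e\<close> ab ABdisj by auto
        qed
      qed (use True ab M_def in auto)
      thus ?thesis by blast
    next
      case False
      hence vAB: "v \<in> A - {a} \<or> v \<in> B - {b}" using v VAB by auto
      then obtain s where s: "s \<in> A - {a}" "v = s \<or> v = f s"
        using fonto by blast
      have "{e\<in>M. v \<in> ends e} = {ed s}"
      proof safe
        fix e assume "e \<in> M" "v \<in> ends e"
        show "e = ed s"
        proof (cases "e = c")
          case True then show ?thesis using \<open>v \<in> ends e\<close> ab False by auto
        next
          case False
          then obtain s' where s': "s' \<in> A - {a}" "e = ed s'" using \<open>e \<in> M\<close> by (auto simp: M_def)
          have "v = s' \<or> v = f s'" using ed[OF s'(1)] s' \<open>v \<in> ends e\<close> by auto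
          moreover have "f s \<in> B" "f s' \<in> B" using fB s(1) s'(1) by auto
          ultimately have "s = s'" using s s'(1) ABdisj f(1) by (auto simp: inj_on_def)
          thus ?thesis using s' by simp
        qed
      next
        show "ed s \<in> M" using s by (auto simp: M_def)
        show "v \<in> ends (ed s)" using ed[OF s(1)] s by auto
      qed
      thus ?thesis by blast
    qed
    thus "deg M ends v = 1" by (auto simp: deg_def)
  qed
  moreover have "c \<in> M" by (simp add: M_def)
  ultimately show ?thesis unfolding perfect_matching_def by blast
qed

end


definition lamF :: "'v set \<Rightarrow> 'e set \<Rightarrow> ('e \<Rightarrow> 'v set) \<Rightarrow> 'v \<Rightarrow> 'v \<Rightarrow> 'e set \<Rightarrow> bool" where
  "lamF V E ends a b F \<longleftrightarrow> F \<subseteq> E \<and> a \<in> V \<and> b \<in> V \<and> deg F ends a = 3 \<and> deg F ends b = 3 \<and>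
     (\<forall>v\<in>V - {a, b}. deg F ends v = 1)"

lemma lam_iff: "lam_matchable V E ends a b \<longleftrightarrow> (\<exists>F. lamF V E ends a b F)"
  unfolding lam_matchable_def lamF_def by blast

lemma lamF_sym: "lamF V E ends a b F = lamF V E ends b a F"
  unfolding lamF_def by (auto simp: insert_commute)

lemma lam_sym: "lam_matchable V E ends a b = lam_matchable V E ends b a"
  using lamF_sym lam_iff by metis

lemma lam_sum:
  assumes "lamF V E ends a b F" "W \<subseteq> V" "finite W"
  shows "(\<Sum>v\<in>W. deg F ends v) = card W + 2 * card (W \<inter> {a, b})"
proof -
  have "(\<Sum>v\<in>W. deg F ends v) = (\<Sum>v\<in>W. 1 + (if v \<in> {a, b} then 2 else 0))"
    using assms(1,2) by (intro sum.cong) (auto simp: lamF_def)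
  also have "\<dots> = (\<Sum>v\<in>W. 1) + (\<Sum>v\<in>W. (if v \<in> {a, b} then 2 else 0))"
    by (rule sum.distrib)
  also have "(\<Sum>v\<in>W. (if v \<in> {a, b} then 2 else 0)) = (\<Sum>v\<in>{v\<in>W. v \<in> {a,b}}. 2::nat)"
    using assms(3) by (rule sum.inter_filter[symmetric])
  also have "{v\<in>W. v \<in> {a,b}} = W \<inter> {a, b}" by auto
  finally show ?thesis by simp
qed

context cbg begin

lemma lam_cross: assumes "lamF V E ends a b F"
  shows "(a \<in> A \<and> b \<in> B) \<or> (a \<in> B \<and> b \<in> A)"
proof -
  have F: "F \<subseteq> E" using assms by (simp add: lamF_def)
  have ab: "a \<in> V" "b \<in> V" using assms by (auto simp: lamF_def)
  have "card A + 2 * card (A \<inter> {a, b}) = card B + 2 * card (B \<inter> {a, b})"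
    using lam_sum[OF assms, of A] lam_sum[OF assms, of B] sumA_all[OF F] sumB_all[OF F] VAB finA finB
    by simp
  hence eq: "card (A \<inter> {a, b}) = card (B \<inter> {a, b})" using cardAB by simp
  have aAB: "a \<in> A \<longleftrightarrow> a \<notin> B" "b \<in> A \<longleftrightarrow> b \<notin> B" using ab VAB ABdisj by auto
  show ?thesis
  proof (rule ccontr)
    assume nc: "\<not> ?thesis"
    hence "(a \<in> A \<and> b \<in> A) \<or> (a \<in> B \<and> b \<in> B)" using aAB by blast
    thus False
    proof
      assume h: "a \<in> A \<and> b \<in> A"
      hence "A \<inter> {a, b} = {a, b}" "B \<inter> {a, b} = {}" using aAB by auto
      thus False using eq by simp
    next
      assume h: "a \<in> B \<and> b \<in> B"
      hence "B \<inter> {a, b} = {a, b}" "A \<inter> {a, b} = {}" using aAB by auto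
      thus False using eq by simp
    qed
  qed
qed

lemma lam_not_refl: "\<not> lamF V E ends a a F"
  using lam_cross ABdisj by blast

lemma cut_char: assumes "e \<in> E"
  shows "\<exists>x y. ends e = {x, y} \<and> x \<in> A \<and> y \<in> B \<and> x \<noteq> y \<and>
      (e \<in> cut E ends X \<longleftrightarrow> (x \<in> X) \<noteq> (y \<in> X))"
proof -
  obtain x y where xy: "ends e = {x, y}" "x \<in> A" "y \<in> B" using ends_AB[OF assms] by blast
  have ne: "x \<noteq> y" using xy ABdisj by auto
  have "card ({x, y} \<inter> X) = 1 \<longleftrightarrow> (x \<in> X) \<noteq> (y \<in> X)"
  proof (cases "x \<in> X"; cases "y \<in> X")
    assume "x \<in> X" "y \<in> X" thus ?thesis using ne by simp
  next
    assume "x \<in> X" "y \<notin> X" hence "{x, y} \<inter> X = {x}" by auto thus ?thesis using \<open>x \<in> X\<close> \<open>y \<notin> X\<close> by simp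
  next
    assume "x \<notin> X" "y \<in> X" hence "{x, y} \<inter> X = {y}" by auto thus ?thesis using \<open>x \<notin> X\<close> \<open>y \<in> X\<close> by simp
  next
    assume "x \<notin> X" "y \<notin> X" hence "{x, y} \<inter> X = {}" by auto thus ?thesis using \<open>x \<notin> X\<close> \<open>y \<notin> X\<close> by simp
  qed
  hence "e \<in> cut E ends X \<longleftrightarrow> (x \<in> X) \<noteq> (y \<in> X)" using xy assms by (simp add: cut_def)
  thus ?thesis using xy ne by blast
qed


lemma cut_compl: assumes "X \<subseteq> V" shows "cut E ends (V - X) = cut E ends X"
proof -
  have "e \<in> cut E ends (V - X) \<longleftrightarrow> e \<in> cut E ends X" if e: "e \<in> E" for e
  proof -
    obtain x y where a: "ends e = {x, y}" "x \<in> A" "y \<in> B" "x \<noteq> y"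
      "(e \<in> cut E ends X \<longleftrightarrow> (x \<in> X) \<noteq> (y \<in> X))" using cut_char[OF e, of X] by blast
    have "card ({x,y} \<inter> (V - X)) = 1 \<longleftrightarrow> (x \<in> V - X) \<noteq> (y \<in> V - X)"
      using cut_char[OF e, of "V - X"] a ABdisj unfolding cut_def
      by (smt (verit, ccfv_threshold) Int_iff disjoint_iff doubleton_eq_iff e mem_Collect_eq)
    moreover have "x \<in> V" "y \<in> V" using a VAB by auto
    ultimately show ?thesis using a e unfolding cut_def by auto
  qed
  thus ?thesis by (auto simp: cut_def)
qed

lemma finCut: "finite (cut E ends X)" using finE by (simp add: cut_def)


lemma key_identity:
  assumes F: "F \<subseteq> E"
  shows "int (\<Sum>v\<in>X\<inter>A. deg F ends v) - int (\<Sum>v\<in>X\<inter>B. deg F ends v)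
     = int (card (F \<inter> {e\<in>cut E ends X. ends e \<inter> X \<subseteq> A})) - int (card (F \<inter> {e\<in>cut E ends X. ends e \<inter> X \<subseteq> B}))"
proof -
  define IF where "IF = {e\<in>F. ends e \<subseteq> X}"
  define CA where "CA = F \<inter> {e\<in>cut E ends X. ends e \<inter> X \<subseteq> A}"
  define CB where "CB = F \<inter> {e\<in>cut E ends X. ends e \<inter> X \<subseteq> B}"
  have finF: "finite F" using F finE finite_subset by blast
  have C: "(e \<in> IF \<longleftrightarrow> x \<in> X \<and> y \<in> X) \<and> (e \<in> CA \<longleftrightarrow> x \<in> X \<and> y \<notin> X) \<and> (e \<in> CB \<longleftrightarrow> x \<notin> X \<and> y \<in> X)
      \<and> (ends e \<inter> (X\<inter>A) \<noteq> {} \<longleftrightarrow> x \<in> X) \<and> (ends e \<inter> (X\<inter>B) \<noteq> {} \<longleftrightarrow> y \<in> X)"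
    if e: "e \<in> F" and xy: "ends e = {x, y}" "x \<in> A" "y \<in> B" "x \<noteq> y"
      "(e \<in> cut E ends X \<longleftrightarrow> (x \<in> X) \<noteq> (y \<in> X))" for e x y
  proof -
    have xB: "x \<notin> B" and yA: "y \<notin> A" using xy ABdisj by auto
    show ?thesis
    proof (cases "x \<in> X"; cases "y \<in> X")
      assume h: "x \<in> X" "y \<in> X"
      hence "ends e \<inter> X = {x, y}" using xy by auto
      thus ?thesis unfolding IF_def CA_def CB_def using e xy xB yA h by simp
    next
      assume h: "x \<in> X" "y \<notin> X"
      hence "ends e \<inter> X = {x}" using xy by auto
      thus ?thesis unfolding IF_def CA_def CB_def using e xy xB yA h by simp
    next
      assume h: "x \<notin> X" "y \<in> X"
      hence "ends e \<inter> X = {y}" using xy by auto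
      thus ?thesis unfolding IF_def CA_def CB_def using e xy xB yA h by simp
    next
      assume h: "x \<notin> X" "y \<notin> X"
      hence "ends e \<inter> X = {}" using xy by auto
      thus ?thesis unfolding IF_def CA_def CB_def using e xy xB yA h by simp
    qed
  qed
  have C': "\<exists>x y. (e \<in> IF \<longleftrightarrow> x \<in> X \<and> y \<in> X) \<and> (e \<in> CA \<longleftrightarrow> x \<in> X \<and> y \<notin> X) \<and> (e \<in> CB \<longleftrightarrow> x \<notin> X \<and> y \<in> X)
      \<and> (ends e \<inter> (X\<inter>A) \<noteq> {} \<longleftrightarrow> x \<in> X) \<and> (ends e \<inter> (X\<inter>B) \<noteq> {} \<longleftrightarrow> y \<in> X)" if e: "e \<in> F" for e
  proof -
    have "e \<in> E" using e F by auto
    from cut_char[OF this, of X] obtain x y where h: "ends e = {x, y} \<and> x \<in> A \<and> y \<in> B \<and> x \<noteq> y \<and>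
      (e \<in> cut E ends X \<longleftrightarrow> (x \<in> X) \<noteq> (y \<in> X))" by (elim exE)
    from C[OF e conjunct1[OF h] conjunct1[OF conjunct2[OF h]] conjunct1[OF conjunct2[OF conjunct2[OF h]]]
       conjunct1[OF conjunct2[OF conjunct2[OF conjunct2[OF h]]]] conjunct2[OF conjunct2[OF conjunct2[OF conjunct2[OF h]]]]] show ?thesis by (rule exI[of _ x, OF exI[of _ y]])
  qed
  have sub: "IF \<subseteq> F" "CA \<subseteq> F" "CB \<subseteq> F" by (auto simp: IF_def CA_def CB_def)
  have P1: "(e \<in> IF \<union> CA \<longleftrightarrow> ends e \<inter> (X\<inter>A) \<noteq> {}) \<and> (e \<in> IF \<union> CB \<longleftrightarrow> ends e \<inter> (X\<inter>B) \<noteq> {})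
     \<and> e \<notin> IF \<inter> CA \<and> e \<notin> IF \<inter> CB" if e: "e \<in> F" for e
  proof -
    obtain x y where "(e \<in> IF \<longleftrightarrow> x \<in> X \<and> y \<in> X) \<and> (e \<in> CA \<longleftrightarrow> x \<in> X \<and> y \<notin> X) \<and> (e \<in> CB \<longleftrightarrow> x \<notin> X \<and> y \<in> X)
      \<and> (ends e \<inter> (X\<inter>A) \<noteq> {} \<longleftrightarrow> x \<in> X) \<and> (ends e \<inter> (X\<inter>B) \<noteq> {} \<longleftrightarrow> y \<in> X)"
      using C'[OF e] by blast
    thus ?thesis by (cases "x \<in> X"; cases "y \<in> X") simp_all
  qed
  have e1: "{e\<in>F. ends e \<inter> (X\<inter>A) \<noteq> {}} = IF \<union> CA"
  proof (intro set_eqI iffI)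
    fix e assume "e \<in> {e\<in>F. ends e \<inter> (X\<inter>A) \<noteq> {}}" thus "e \<in> IF \<union> CA" using P1 by simp
  next
    fix e assume h: "e \<in> IF \<union> CA" hence "e \<in> F" using sub by auto
    thus "e \<in> {e\<in>F. ends e \<inter> (X\<inter>A) \<noteq> {}}" using P1 h by simp
  qed
  have e2: "{e\<in>F. ends e \<inter> (X\<inter>B) \<noteq> {}} = IF \<union> CB"
  proof (intro set_eqI iffI)
    fix e assume "e \<in> {e\<in>F. ends e \<inter> (X\<inter>B) \<noteq> {}}" thus "e \<in> IF \<union> CB" using P1 by simp
  next
    fix e assume h: "e \<in> IF \<union> CB" hence "e \<in> F" using sub by auto
    thus "e \<in> {e\<in>F. ends e \<inter> (X\<inter>B) \<noteq> {}}" using P1 h by simp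
  qed
  have d1: "IF \<inter> CA = {}" using P1 sub by blast
  have d2: "IF \<inter> CB = {}" using P1 sub by blast
  have fin: "finite IF" "finite CA" "finite CB" using sub finF finite_subset by blast+
  have s1: "(\<Sum>v\<in>X\<inter>A. deg F ends v) = card IF + card CA"
    using sumdeg_A[of "X\<inter>A" F] F e1 d1 fin by (simp add: card_Un_disjoint)
  have s2: "(\<Sum>v\<in>X\<inter>B. deg F ends v) = card IF + card CB"
    using sumdeg_B[of "X\<inter>B" F] F e2 d2 fin by (simp add: card_Un_disjoint)
  show ?thesis using s1 s2 by (simp add: CA_def CB_def)
qed

end


context cbg begin

lemma cut_sub: "cut E ends X \<subseteq> E" by (auto simp: cut_def)

lemma cut_ne: "e \<in> cut E ends X \<Longrightarrow> ends e \<inter> X \<noteq> {}"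
  by (auto simp: cut_def)

lemma cut_touch: assumes "e \<in> E" "X \<subseteq> V"
  shows "e \<in> cut E ends X \<longleftrightarrow> ends e \<inter> X \<noteq> {} \<and> ends e \<inter> (V - X) \<noteq> {}"
proof -
  from cut_char[OF assms(1), of X] obtain x y where h: "ends e = {x, y}" "x \<in> A" "y \<in> B" "x \<noteq> y"
    "(e \<in> cut E ends X \<longleftrightarrow> (x \<in> X) \<noteq> (y \<in> X))" by blast
  have "x \<in> V" "y \<in> V" using h VAB by auto
  thus ?thesis using h by auto
qed

lemma pm_count:
  assumes "perfect_matching V E ends M" "X \<subseteq> V" "tight_cut V E ends X"
  shows "int (card (X\<inter>A)) - int (card (X\<inter>B)) =
      int (card (M \<inter> {e\<in>cut E ends X. ends e \<inter> X \<subseteq> A})) - int (card (M \<inter> {e\<in>cut E ends X. ends e \<inter> X \<subseteq> B}))"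
   and "card (M \<inter> {e\<in>cut E ends X. ends e \<inter> X \<subseteq> A}) + card (M \<inter> {e\<in>cut E ends X. ends e \<inter> X \<subseteq> B}) = 1"
proof -
  have M: "M \<subseteq> E" "\<forall>v\<in>V. deg M ends v = 1" using assms(1) by (auto simp: perfect_matching_def)
  have "(\<Sum>v\<in>X\<inter>A. deg M ends v) = (\<Sum>v\<in>X\<inter>A. 1)" using M(2) assms(2) by (intro sum.cong) auto
  hence "(\<Sum>v\<in>X\<inter>A. deg M ends v) = card (X\<inter>A)" by simp
  moreover have "(\<Sum>v\<in>X\<inter>B. deg M ends v) = (\<Sum>v\<in>X\<inter>B. 1)" using M(2) assms(2) by (intro sum.cong) auto
  hence "(\<Sum>v\<in>X\<inter>B. deg M ends v) = card (X\<inter>B)" by simp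
  ultimately show "int (card (X\<inter>A)) - int (card (X\<inter>B)) =
      int (card (M \<inter> {e\<in>cut E ends X. ends e \<inter> X \<subseteq> A})) - int (card (M \<inter> {e\<in>cut E ends X. ends e \<inter> X \<subseteq> B}))"
    using key_identity[OF M(1), of X] by simp
  have un: "cut E ends X \<inter> M = (M \<inter> {e\<in>cut E ends X. ends e \<inter> X \<subseteq> A}) \<union> (M \<inter> {e\<in>cut E ends X. ends e \<inter> X \<subseteq> B})"
  proof -
    have "ends e \<inter> X \<subseteq> A \<or> ends e \<inter> X \<subseteq> B" if e: "e \<in> cut E ends X" for e
    proof -
      have "card (ends e \<inter> X) = 1" using e by (simp add: cut_def)
      then obtain z where z: "ends e \<inter> X = {z}" using card_1_singletonE by blast
      moreover have "ends e \<subseteq> A \<union> B" using e cut_sub ends_sub VAB by blast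
      ultimately show ?thesis by auto
    qed
    thus ?thesis by blast
  qed
  have di: "(M \<inter> {e\<in>cut E ends X. ends e \<inter> X \<subseteq> A}) \<inter> (M \<inter> {e\<in>cut E ends X. ends e \<inter> X \<subseteq> B}) = {}"
  proof -
    have False if "e \<in> cut E ends X" "ends e \<inter> X \<subseteq> A" "ends e \<inter> X \<subseteq> B" for e
    proof -
      have "ends e \<inter> X \<subseteq> A \<inter> B" using that by auto
      thus False using cut_ne[OF that(1)] ABdisj by auto
    qed
    thus ?thesis by auto
  qed
  have fM: "finite M" using M(1) finE finite_subset by blast
  have "card (cut E ends X \<inter> M) = 1" using assms(1,3) by (auto simp: tight_cut_def)
  thus "card (M \<inter> {e\<in>cut E ends X. ends e \<inter> X \<subseteq> A}) + card (M \<inter> {e\<in>cut E ends X. ends e \<inter> X \<subseteq> B}) = 1"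
  proof -
    have "card (cut E ends X \<inter> M) = card (M \<inter> {e\<in>cut E ends X. ends e \<inter> X \<subseteq> A}) + card (M \<inter> {e\<in>cut E ends X. ends e \<inter> X \<subseteq> B})"
      unfolding un by (rule card_Un_disjoint) (use fM di in auto)
    thus ?thesis using \<open>card (cut E ends X \<inter> M) = 1\<close> by linarith
  qed
qed

lemma orientation_pos:
  assumes "X \<subseteq> V" "tight_cut V E ends X" "int (card (X\<inter>A)) - int (card (X\<inter>B)) = 1"
  shows "\<forall>e\<in>cut E ends X. ends e \<inter> X \<subseteq> A"
proof
  fix e assume e: "e \<in> cut E ends X"
  show "ends e \<inter> X \<subseteq> A"
  proof (rule ccontr)
    assume nA: "\<not> ends e \<inter> X \<subseteq> A"
    have "card (ends e \<inter> X) = 1" using e by (simp add: cut_def)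
    then obtain z where z: "ends e \<inter> X = {z}" using card_1_singletonE by blast
    have "ends e \<subseteq> A \<union> B" using e cut_sub ends_sub VAB by blast
    hence eB: "ends e \<inter> X \<subseteq> B" using z nA by auto
    have eE: "e \<in> E" using e cut_sub by blast
    obtain M where M: "perfect_matching V E ends M" "e \<in> M" using MC[OF eE] by blast
    have "M \<subseteq> E" using M(1) by (simp add: perfect_matching_def)
    hence fM: "finite M" using finE finite_subset by blast
    have "e \<in> M \<inter> {e\<in>cut E ends X. ends e \<inter> X \<subseteq> B}" using e eB M by auto
    moreover have "finite (M \<inter> {e\<in>cut E ends X. ends e \<inter> X \<subseteq> B})" using fM by simp
    ultimately have "card (M \<inter> {e\<in>cut E ends X. ends e \<inter> X \<subseteq> B}) > 0"
      using card_gt_0_iff by blast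
    hence "card (M \<inter> {e\<in>cut E ends X. ends e \<inter> X \<subseteq> B}) \<ge> 1" by simp
    thus False using pm_count[OF M(1) assms(1,2)] assms(3) by linarith
  qed
qed

lemma orientation:
  assumes "X \<subseteq> V" "tight_cut V E ends X" "V \<noteq> {}"
  shows "(card (X\<inter>A) = card (X\<inter>B) + 1 \<and> (\<forall>e\<in>cut E ends X. ends e \<inter> X \<subseteq> A)) \<or>
         (card (X\<inter>B) = card (X\<inter>A) + 1 \<and> (\<forall>e\<in>cut E ends X. ends e \<inter> X \<subseteq> B))"
proof -
  obtain v where v: "v \<in> V" using assms(3) by blast
  hence "deg E ends v = 3" using deg3 by simp
  then obtain c where c: "c \<in> E" by (auto simp: deg_def) (metis (no_types, lifting) Collect_empty_eq card.empty zero_neq_numeral)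
  obtain M where M: "perfect_matching V E ends M" using MC[OF c] by blast
  define p where "p = card (M \<inter> {e\<in>cut E ends X. ends e \<inter> X \<subseteq> A})"
  define q where "q = card (M \<inter> {e\<in>cut E ends X. ends e \<inter> X \<subseteq> B})"
  have pq: "int (card (X\<inter>A)) - int (card (X\<inter>B)) = int p - int q" "p + q = 1"
    using pm_count[OF M assms(1,2)] unfolding p_def q_def by auto
  hence "(p = 1 \<and> q = 0) \<or> (p = 0 \<and> q = 1)" by auto
  hence "int (card (X\<inter>A)) - int (card (X\<inter>B)) = 1 \<or> int (card (X\<inter>B)) - int (card (X\<inter>A)) = 1"
    using pq(1) by auto
  thus ?thesis
  proof
    assume h: "int (card (X\<inter>A)) - int (card (X\<inter>B)) = 1"
    thus ?thesis using orientation_pos[OF assms(1,2)] by simp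
  next
    assume h: "int (card (X\<inter>B)) - int (card (X\<inter>A)) = 1"
    thus ?thesis using cbg.orientation_pos[OF cbg_swap assms(1,2)] by simp
  qed
qed

end

locale ocbg = cbg +
  fixes X :: "'v set"
  assumes XV: "X \<subseteq> V" and tight: "tight_cut V E ends X"
    and bal: "card (X\<inter>A) = card (X\<inter>B) + 1" and ori: "\<forall>e\<in>cut E ends X. ends e \<inter> X \<subseteq> A"
begin

abbreviation "C \<equiv> cut E ends X"

lemma ident: assumes "F \<subseteq> E"
  shows "(\<Sum>v\<in>X\<inter>A. deg F ends v) = (\<Sum>v\<in>X\<inter>B. deg F ends v) + card (F \<inter> C)"
proof -
  have "F \<inter> {e\<in>C. ends e \<inter> X \<subseteq> A} = F \<inter> C" using ori by auto
  moreover have "F \<inter> {e\<in>C. ends e \<inter> X \<subseteq> B} = {}"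
  proof -
    have False if "e \<in> C" "ends e \<inter> X \<subseteq> B" for e
    proof -
      have "ends e \<inter> X \<subseteq> A \<inter> B" using that ori by auto
      thus False using cut_ne[OF that(1)] ABdisj by auto
    qed
    thus ?thesis by auto
  qed
  moreover have k: "int (\<Sum>v\<in>X\<inter>A. deg F ends v) - int (\<Sum>v\<in>X\<inter>B. deg F ends v)
     = int (card (F \<inter> {e\<in>C. ends e \<inter> X \<subseteq> A})) - int (card (F \<inter> {e\<in>C. ends e \<inter> X \<subseteq> B}))"
    by (rule key_identity[OF assms])
  ultimately have "int (\<Sum>v\<in>X\<inter>A. deg F ends v) - int (\<Sum>v\<in>X\<inter>B. deg F ends v) = int (card (F \<inter> C))"
    by (simp only: card.empty of_nat_0 diff_0_right)
  thus ?thesis by linarith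
qed

lemma cardC: "card C = 3"
proof -
  have "X\<inter>A \<subseteq> V" "X\<inter>B \<subseteq> V" using XV by auto
  hence "(\<Sum>v\<in>X\<inter>A. deg E ends v) = 3 * card (X\<inter>A)" "(\<Sum>v\<in>X\<inter>B. deg E ends v) = 3 * card (X\<inter>B)"
    using sum3 by blast+
  moreover have "E \<inter> C = C" using cut_sub by auto
  ultimately show ?thesis using ident[of E] bal by simp
qed

end


context ocbg begin

abbreviation "GV \<equiv> shrinkV V (V - X)"
abbreviation "GE \<equiv> shrinkE E ends (V - X)"
abbreviation "Gg \<equiv> shrink_ends ends (V - X)"

lemma GE_iff: "e \<in> GE \<longleftrightarrow> e \<in> E \<and> ends e \<inter> X \<noteq> {}"
proof -
  have "e \<in> E \<Longrightarrow> ends e - (V - X) = ends e \<inter> X" using ends_sub XV by auto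
  thus ?thesis by (auto simp: shrinkE_def)
qed

lemma GE_sub: "GE \<subseteq> E" using GE_iff by auto

lemma C_GE: "C \<subseteq> GE" using GE_iff cut_sub cut_ne by blast

lemma Gg_Some: "v \<in> X \<Longrightarrow> Some v \<in> Gg e \<longleftrightarrow> v \<in> ends e"
  by (auto simp: shrink_ends_def shrink_map_def split: if_splits)

lemma Gg_None: "None \<in> Gg e \<longleftrightarrow> ends e \<inter> (V - X) \<noteq> {}"
  by (auto simp: shrink_ends_def shrink_map_def split: if_splits)

lemma GV_eq: "GV = Some ` X \<union> {None}"
proof -
  have "V - (V - X) = X" using XV by auto
  thus ?thesis by (simp add: shrinkV_def)
qed

lemma degG_Some: "v \<in> X \<Longrightarrow> deg F Gg (Some v) = deg F ends v"
  unfolding deg_def using Gg_Some by simp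

lemma GE_cut: "e \<in> GE \<Longrightarrow> e \<in> C \<longleftrightarrow> ends e \<inter> (V - X) \<noteq> {}"
  using GE_iff cut_touch[OF _ XV] by blast

lemma degG_None: "F \<subseteq> GE \<Longrightarrow> deg F Gg None = card (F \<inter> C)"
proof -
  assume F: "F \<subseteq> GE"
  have "{e\<in>F. None \<in> Gg e} = F \<inter> C" using F GE_cut Gg_None by blast
  thus ?thesis by (simp add: deg_def)
qed

lemma deg_restrict: "v \<in> X \<Longrightarrow> F \<subseteq> E \<Longrightarrow> deg (F \<inter> GE) ends v = deg F ends v"
proof -
  assume v: "v \<in> X" and F: "F \<subseteq> E"
  have "{e\<in>F \<inter> GE. v \<in> ends e} = {e\<in>F. v \<in> ends e}" using v F GE_iff by blast
  thus ?thesis by (simp add: deg_def)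
qed

lemma GE_form: assumes e: "e \<in> GE"
  shows "\<exists>x y. ends e = {x, y} \<and> x \<in> A \<and> x \<in> X \<and> y \<in> B \<and> x \<noteq> y \<and>
     Gg e = {Some x, if y \<in> X then Some y else None} \<and> (e \<in> C \<longleftrightarrow> y \<notin> X)"
proof -
  have eE: "e \<in> E" "ends e \<inter> X \<noteq> {}" using e GE_iff by auto
  from cut_char[OF eE(1), of X] obtain x y where h: "ends e = {x, y} \<and> x \<in> A \<and> y \<in> B \<and> x \<noteq> y \<and>
      (e \<in> C \<longleftrightarrow> (x \<in> X) \<noteq> (y \<in> X))" by (elim exE)
  have xyV: "x \<in> V" "y \<in> V" using h VAB by auto
  have yA: "y \<notin> A" using h ABdisj by auto
  have xX: "x \<in> X"
  proof (rule ccontr)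
    assume "x \<notin> X"
    hence yX: "y \<in> X" using eE(2) h by auto
    hence "e \<in> C" using h \<open>x \<notin> X\<close> by auto
    hence "ends e \<inter> X \<subseteq> A" using ori by auto
    thus False using yX h yA by auto
  qed
  have "Gg e = {Some x, if y \<in> X then Some y else None}"
    using h xX xyV by (auto simp: shrink_ends_def shrink_map_def)
  thus ?thesis using h xX by auto
qed

lemma G_cbg: "cbg GV GE Gg (Some ` (X \<inter> A)) (Some ` (X \<inter> B) \<union> {None})"
proof
  show "mgraph GV GE Gg"
    unfolding mgraph_def
  proof (intro conjI ballI)
    show "finite GV" using finV by (simp add: shrinkV_def)
    show "finite GE" using finE GE_sub finite_subset by blast
    fix e assume e: "e \<in> GE"
    from GE_form[OF e] obtain x y where h: "ends e = {x, y}" "x \<in> A" "x \<in> X" "y \<in> B" "x \<noteq> y"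
      "Gg e = {Some x, if y \<in> X then Some y else None}" by blast
    have "y \<in> V" using h VAB by auto
    show "Gg e \<subseteq> GV" using h \<open>y \<in> V\<close> GV_eq by auto
    show "card (Gg e) = 2" using h by auto
  qed
  show "bipartition GV GE Gg (Some ` (X \<inter> A)) (Some ` (X \<inter> B) \<union> {None})"
    unfolding bipartition_def
  proof (intro conjI ballI)
    show "Some ` (X \<inter> A) \<union> (Some ` (X \<inter> B) \<union> {None}) = GV" using GV_eq VAB XV by auto
    show "Some ` (X \<inter> A) \<inter> (Some ` (X \<inter> B) \<union> {None}) = {}" using ABdisj by auto
    fix e assume e: "e \<in> GE"
    from GE_form[OF e] obtain x y where h: "ends e = {x, y}" "x \<in> A" "x \<in> X" "y \<in> B" "x \<noteq> y"
      "Gg e = {Some x, if y \<in> X then Some y else None}" by blast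
    have yA: "y \<notin> A" and xB: "x \<notin> B" using h ABdisj by auto
    have "Gg e \<inter> Some ` (X \<inter> A) = {Some x}" using h yA by auto
    thus "card (Gg e \<inter> Some ` (X \<inter> A)) = 1" by simp
    have "Gg e \<inter> (Some ` (X \<inter> B) \<union> {None}) = {if y \<in> X then Some y else None}" using h xB by auto
    thus "card (Gg e \<inter> (Some ` (X \<inter> B) \<union> {None})) = 1" by simp
  qed
  show "cubic GV GE Gg"
    unfolding cubic_def
  proof
    fix w assume w: "w \<in> GV"
    show "deg GE Gg w = 3"
    proof (cases w)
      case None
      have "GE \<inter> C = C" using C_GE by auto
      thus ?thesis using None degG_None[OF subset_refl] cardC by simp
    next
      case (Some v)
      hence v: "v \<in> X" using w GV_eq by auto
      have "deg GE Gg w = deg (E \<inter> GE) ends v" using degG_Some[OF v] Some GE_sub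
        by (simp add: Int_absorb1)
      also have "\<dots> = deg E ends v" using deg_restrict[OF v subset_refl] .
      also have "\<dots> = 3" using deg3 v XV by auto
      finally show ?thesis .
    qed
  qed
qed

end


context ocbg begin

lemma lam_in_in:
  assumes L: "lamF V E ends a b F" and a: "a \<in> X" and b: "b \<in> X"
  shows "lamF GV GE Gg (Some a) (Some b) (F \<inter> GE)"
proof -
  have F: "F \<subseteq> E" using L by (simp add: lamF_def)
  have XAV: "X\<inter>A \<subseteq> V" "X\<inter>B \<subseteq> V" "finite (X\<inter>A)" "finite (X\<inter>B)" using XV finA finB by auto
  have s: "(\<Sum>v\<in>X\<inter>A. deg F ends v) = card (X\<inter>A) + 2 * card (X\<inter>A \<inter> {a, b})"
          "(\<Sum>v\<in>X\<inter>B. deg F ends v) = card (X\<inter>B) + 2 * card (X\<inter>B \<inter> {a, b})"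
    using lam_sum[OF L XAV(1,3)] lam_sum[OF L XAV(2,4)] by auto
  have c1: "card (X\<inter>A \<inter> {a, b}) = 1 \<and> card (X\<inter>B \<inter> {a, b}) = 1"
  proof (cases "a \<in> A \<and> b \<in> B")
    case True
    hence "X\<inter>A \<inter> {a, b} = {a}" "X\<inter>B \<inter> {a, b} = {b}" using a b ABdisj by auto
    thus ?thesis by simp
  next
    case False
    hence "a \<in> B \<and> b \<in> A" using lam_cross[OF L] by blast
    hence "X\<inter>A \<inter> {a, b} = {b}" "X\<inter>B \<inter> {a, b} = {a}" using a b ABdisj by auto
    thus ?thesis by simp
  qed
  have cF: "card (F \<inter> C) = 1" using ident[OF F] s c1 bal by simp
  have FGC: "F \<inter> GE \<inter> C = F \<inter> C" using C_GE by auto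
  show ?thesis unfolding lamF_def
  proof (intro conjI ballI)
    show "F \<inter> GE \<subseteq> GE" by simp
    show "Some a \<in> GV" "Some b \<in> GV" using a b GV_eq by auto
    show "deg (F \<inter> GE) Gg (Some a) = 3" using degG_Some[OF a] deg_restrict[OF a F] L by (simp add: lamF_def)
    show "deg (F \<inter> GE) Gg (Some b) = 3" using degG_Some[OF b] deg_restrict[OF b F] L by (simp add: lamF_def)
    fix w assume w: "w \<in> GV - {Some a, Some b}"
    show "deg (F \<inter> GE) Gg w = 1"
    proof (cases w)
      case None
      thus ?thesis using degG_None[of "F \<inter> GE"] FGC cF by simp
    next
      case (Some v)
      hence v: "v \<in> X" "v \<noteq> a" "v \<noteq> b" using w GV_eq by auto
      hence "v \<in> V - {a, b}" using XV by auto
      hence "deg F ends v = 1" using L by (simp add: lamF_def)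
      thus ?thesis using Some degG_Some[OF v(1)] deg_restrict[OF v(1) F] by simp
    qed
  qed
qed

lemma lam_in_out:
  assumes L: "lamF V E ends a b F" and a: "a \<in> X" and b: "b \<in> V - X"
  shows "C \<subseteq> F \<and> lamF GV GE Gg (Some a) None (F \<inter> GE)"
proof -
  have F: "F \<subseteq> E" using L by (simp add: lamF_def)
  have XAV: "X\<inter>A \<subseteq> V" "X\<inter>B \<subseteq> V" "finite (X\<inter>A)" "finite (X\<inter>B)" using XV finA finB by auto
  have s: "(\<Sum>v\<in>X\<inter>A. deg F ends v) = card (X\<inter>A) + 2 * card (X\<inter>A \<inter> {a, b})"
          "(\<Sum>v\<in>X\<inter>B. deg F ends v) = card (X\<inter>B) + 2 * card (X\<inter>B \<inter> {a, b})"
    using lam_sum[OF L XAV(1,3)] lam_sum[OF L XAV(2,4)] by auto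
  have aA: "a \<in> A"
  proof (rule ccontr)
    assume "a \<notin> A"
    hence "a \<in> B" using a XV VAB by auto
    hence "X\<inter>A \<inter> {a, b} = {}" "X\<inter>B \<inter> {a, b} = {a}" using a b ABdisj by auto
    thus False using ident[OF F] s bal by simp
  qed
  hence "X\<inter>A \<inter> {a, b} = {a}" "X\<inter>B \<inter> {a, b} = {}" using a b ABdisj by auto
  hence cF: "card (F \<inter> C) = 3" using ident[OF F] s bal by simp
  have "F \<inter> C = C" using card_subset_eq[OF finCut, of "F \<inter> C"] cF cardC by auto
  hence CF: "C \<subseteq> F" by auto
  have FGC: "F \<inter> GE \<inter> C = C" using C_GE CF by auto
  have "lamF GV GE Gg (Some a) None (F \<inter> GE)" unfolding lamF_def
  proof (intro conjI ballI)
    show "F \<inter> GE \<subseteq> GE" by simp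
    show "Some a \<in> GV" "None \<in> GV" using a GV_eq by auto
    show "deg (F \<inter> GE) Gg (Some a) = 3" using degG_Some[OF a] deg_restrict[OF a F] L by (simp add: lamF_def)
    show "deg (F \<inter> GE) Gg None = 3" using degG_None[of "F \<inter> GE"] FGC cardC by simp
    fix w assume w: "w \<in> GV - {Some a, None}"
    then obtain v where Some: "w = Some v" by (cases w) auto
    hence v: "v \<in> X" "v \<noteq> a" using w GV_eq by auto
    hence "v \<in> V - {a, b}" using XV b by auto
    hence "deg F ends v = 1" using L by (simp add: lamF_def)
    thus "deg (F \<inter> GE) Gg w = 1" using Some degG_Some[OF v(1)] deg_restrict[OF v(1) F] by simp
  qed
  thus ?thesis using CF by simp
qed

lemma lam_G_in_in:
  assumes L: "lamF GV GE Gg (Some a) (Some b) F1"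
  shows "a \<in> X \<and> b \<in> X \<and> (\<exists>F. lamF V E ends a b F)"
proof -
  have F1: "F1 \<subseteq> GE" using L by (simp add: lamF_def)
  have ab: "a \<in> X" "b \<in> X" using L GV_eq by (auto simp: lamF_def)
  have "None \<in> GV - {Some a, Some b}" using GV_eq by auto
  hence "deg F1 Gg None = 1" using L by (simp add: lamF_def)
  hence "card (F1 \<inter> C) = 1" using degG_None[OF F1] by simp
  then obtain c where c: "F1 \<inter> C = {c}" using card_1_singletonE by blast
  have cE: "c \<in> E" using c cut_sub by auto
  obtain M where M: "perfect_matching V E ends M" "c \<in> M" using MC[OF cE] by blast
  have ME: "M \<subseteq> E" and Mdeg: "\<forall>v\<in>V. deg M ends v = 1" using M(1) by (auto simp: perfect_matching_def)
  have "card (C \<inter> M) = 1" using tight M(1) by (simp add: tight_cut_def)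
  moreover have "c \<in> C \<inter> M" using c M(2) by auto
  ultimately have CM: "C \<inter> M = {c}" by (metis card_1_singletonE singletonD)
  define F where "F = F1 \<union> {e\<in>M. ends e \<inter> (V - X) \<noteq> {}}"
  have FE: "F \<subseteq> E" using F1 GE_sub ME by (auto simp: F_def)
  have dX: "deg F ends v = deg F1 Gg (Some v)" if v: "v \<in> X" for v
  proof -
    have "{e\<in>F. v \<in> ends e} = {e\<in>F1. v \<in> ends e}"
    proof (intro set_eqI iffI)
      fix e assume e: "e \<in> {e\<in>F. v \<in> ends e}"
      show "e \<in> {e\<in>F1. v \<in> ends e}"
      proof (cases "e \<in> F1")
        case True then show ?thesis using e by simp
      next
        case False
        hence eM: "e \<in> M" "ends e \<inter> (V - X) \<noteq> {}" "v \<in> ends e" using e by (auto simp: F_def)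
        have "e \<in> C" using cut_touch[OF _ XV] eM ME v by blast
        hence "e = c" using CM eM by auto
        thus ?thesis using c eM by auto
      qed
    qed (auto simp: F_def)
    thus ?thesis using degG_Some[OF v] by (simp add: deg_def)
  qed
  have dY: "deg F ends v = 1" if v: "v \<in> V - X" for v
  proof -
    have "{e\<in>F. v \<in> ends e} = {e\<in>M. v \<in> ends e}"
    proof (intro set_eqI iffI)
      fix e assume e: "e \<in> {e\<in>F. v \<in> ends e}"
      show "e \<in> {e\<in>M. v \<in> ends e}"
      proof (cases "e \<in> F1")
        case True
        hence "e \<in> GE" using F1 by auto
        hence "e \<in> C" using GE_cut e v by auto
        hence "e = c" using c True by auto
        thus ?thesis using M(2) e by auto
      next
        case False then show ?thesis using e by (auto simp: F_def)
      qed
    next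
      fix e assume "e \<in> {e\<in>M. v \<in> ends e}"
      thus "e \<in> {e\<in>F. v \<in> ends e}" using v by (auto simp: F_def)
    qed
    thus ?thesis using Mdeg v by (simp add: deg_def)
  qed
  have "lamF V E ends a b F" unfolding lamF_def
  proof (intro conjI ballI)
    show "F \<subseteq> E" by (rule FE)
    show "a \<in> V" "b \<in> V" using ab XV by auto
    show "deg F ends a = 3" using dX[OF ab(1)] L by (simp add: lamF_def)
    show "deg F ends b = 3" using dX[OF ab(2)] L by (simp add: lamF_def)
    fix v assume v: "v \<in> V - {a, b}"
    show "deg F ends v = 1"
    proof (cases "v \<in> X")
      case True
      hence "Some v \<in> GV - {Some a, Some b}" using v GV_eq by auto
      thus ?thesis using dX[OF True] L by (simp add: lamF_def)
    next
      case False then show ?thesis using dY v by auto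
    qed
  qed
  thus ?thesis using ab by blast
qed

lemma lam_G_in_none:
  assumes L: "lamF GV GE Gg (Some a) None F1"
  shows "a \<in> X \<and> C \<subseteq> F1 \<and> F1 \<subseteq> GE \<and> deg F1 ends a = 3 \<and> (\<forall>v\<in>X - {a}. deg F1 ends v = 1)"
proof -
  have F1: "F1 \<subseteq> GE" using L by (simp add: lamF_def)
  have a: "a \<in> X" using L GV_eq by (auto simp: lamF_def)
  have "deg F1 Gg None = 3" using L by (simp add: lamF_def)
  hence "card (F1 \<inter> C) = 3" using degG_None[OF F1] by simp
  hence "F1 \<inter> C = C" using card_subset_eq[OF finCut, of "F1 \<inter> C"] cardC by auto
  hence CF: "C \<subseteq> F1" by auto
  have "deg F1 ends a = 3" using L degG_Some[OF a] by (simp add: lamF_def)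
  moreover have "\<forall>v\<in>X - {a}. deg F1 ends v = 1"
  proof
    fix v assume v: "v \<in> X - {a}"
    hence "Some v \<in> GV - {Some a, None}" using GV_eq by auto
    moreover have "\<forall>w\<in>GV - {Some a, None}. deg F1 Gg w = 1" using L by (simp add: lamF_def)
    ultimately have "deg F1 Gg (Some v) = 1" by blast
    thus "deg F1 ends v = 1" using degG_Some[of v] v by simp
  qed
  ultimately show ?thesis using a CF F1 by blast
qed

end

lemma (in cbg) glue:
  assumes XV: "X \<subseteq> V" and F1: "F1 \<subseteq> E" and F2: "F2 \<subseteq> E"
    and t1: "\<forall>e\<in>F1. ends e \<inter> X \<noteq> {}" and t2: "\<forall>e\<in>F2. ends e \<inter> (V - X) \<noteq> {}"
    and c1: "cut E ends X \<subseteq> F1" and c2: "cut E ends X \<subseteq> F2"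
  shows "v \<in> X \<Longrightarrow> deg (F1 \<union> F2) ends v = deg F1 ends v"
    and "v \<in> V - X \<Longrightarrow> deg (F1 \<union> F2) ends v = deg F2 ends v"
proof -
  assume v: "v \<in> X"
  have "{e\<in>F1 \<union> F2. v \<in> ends e} = {e\<in>F1. v \<in> ends e}"
  proof (intro set_eqI iffI)
    fix e assume e: "e \<in> {e\<in>F1 \<union> F2. v \<in> ends e}"
    show "e \<in> {e\<in>F1. v \<in> ends e}"
    proof (cases "e \<in> F1")
      case False
      hence "e \<in> F2" using e by auto
      hence "e \<in> cut E ends X" using cut_touch[OF _ XV] F2 t2 e v by blast
      thus ?thesis using c1 e by auto
    qed (use e in auto)
  qed auto
  thus "deg (F1 \<union> F2) ends v = deg F1 ends v" by (simp add: deg_def)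
next
  assume v: "v \<in> V - X"
  have "{e\<in>F1 \<union> F2. v \<in> ends e} = {e\<in>F2. v \<in> ends e}"
  proof (intro set_eqI iffI)
    fix e assume e: "e \<in> {e\<in>F1 \<union> F2. v \<in> ends e}"
    show "e \<in> {e\<in>F2. v \<in> ends e}"
    proof (cases "e \<in> F2")
      case False
      hence "e \<in> F1" using e by auto
      hence "e \<in> cut E ends X" using cut_touch[OF _ XV] F1 t1 e v by blast
      thus ?thesis using c2 e by auto
    qed (use e in auto)
  qed auto
  thus "deg (F1 \<union> F2) ends v = deg F2 ends v" by (simp add: deg_def)
qed


lemma cbg_unfold: "cbg V E ends A B \<Longrightarrow> mgraph V E ends \<and> bipartite V E ends \<and> cubic V E ends"
  unfolding cbg_def bipartite_def by blast

lemma rho_facts: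
  assumes "mgraph V E ends" "bipartite V E ends" "cubic V E ends"
  shows "2 * rho V E ends = card {(a, b). lam_matchable V E ends a b}"
    and "rho_v V E ends u = card {w. lam_matchable V E ends u w}"
proof -
  obtain A' B' where p: "sides V E ends = (A', B')" by (cases "sides V E ends") auto
  have "\<exists>p. bipartition V E ends (fst p) (snd p)" using assms(2) by (auto simp: bipartite_def)
  hence "bipartition V E ends (fst (sides V E ends)) (snd (sides V E ends))"
    unfolding sides_def by (rule someI_ex)
  hence bp: "bipartition V E ends A' B'" using p by simp
  interpret c: cbg V E ends A' B' using assms(1,3) bp by unfold_locales
  have cross: "(a \<in> A' \<and> b \<in> B') \<or> (a \<in> B' \<and> b \<in> A')" if "lam_matchable V E ends a b" for a b
    using that c.lam_cross lam_iff by metis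
  define P where "P = {(a, b). a \<in> A' \<and> b \<in> B' \<and> lam_matchable V E ends a b}"
  have rho: "rho V E ends = card P" by (simp add: rho_def p P_def)
  have LP: "{(a, b). lam_matchable V E ends a b} = P \<union> prod.swap ` P"
  proof (intro set_eqI iffI)
    fix x assume "x \<in> {(a, b). lam_matchable V E ends a b}"
    then obtain a b where x: "x = (a, b)" "lam_matchable V E ends a b" by blast
    show "x \<in> P \<union> prod.swap ` P"
    proof (cases "a \<in> A' \<and> b \<in> B'")
      case True thus ?thesis using x by (auto simp: P_def)
    next
      case False
      hence "a \<in> B' \<and> b \<in> A'" using cross[OF x(2)] by blast
      moreover have "lam_matchable V E ends b a" using x(2) lam_sym by metis
      ultimately have "(b, a) \<in> P" by (auto simp: P_def)
      hence "prod.swap (b, a) \<in> prod.swap ` P" by blast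
      thus ?thesis using x by simp
    qed
  next
    fix x assume "x \<in> P \<union> prod.swap ` P"
    thus "x \<in> {(a, b). lam_matchable V E ends a b}"
      using lam_sym[of V E ends] by (auto simp: P_def)
  qed
  have dis: "P \<inter> prod.swap ` P = {}" using c.ABdisj by (auto simp: P_def)
  have "P \<subseteq> V \<times> V" by (auto simp: P_def lam_matchable_def)
  hence finP: "finite P" using c.finV finite_subset by blast
  have "card (prod.swap ` P) = card P" by (simp add: card_image)
  thus "2 * rho V E ends = card {(a, b). lam_matchable V E ends a b}"
    unfolding LP rho using card_Un_disjoint[OF finP _ dis] finP by simp
  have "{w. (u \<in> A' \<and> w \<in> B' \<and> lam_matchable V E ends u w) \<or> (u \<in> B' \<and> w \<in> A' \<and> lam_matchable V E ends w u)}
     = {w. lam_matchable V E ends u w}"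
  proof (intro set_eqI iffI)
    fix w assume "w \<in> {w. (u \<in> A' \<and> w \<in> B' \<and> lam_matchable V E ends u w) \<or> (u \<in> B' \<and> w \<in> A' \<and> lam_matchable V E ends w u)}"
    thus "w \<in> {w. lam_matchable V E ends u w}" using lam_sym[of V E ends] by auto
  next
    fix w assume w: "w \<in> {w. lam_matchable V E ends u w}"
    hence l: "lam_matchable V E ends u w" "lam_matchable V E ends w u" using lam_sym[of V E ends] by auto
    show "w \<in> {w. (u \<in> A' \<and> w \<in> B' \<and> lam_matchable V E ends u w) \<or> (u \<in> B' \<and> w \<in> A' \<and> lam_matchable V E ends w u)}"
      using cross[OF l(1)] l by blast
  qed
  thus "rho_v V E ends u = card {w. lam_matchable V E ends u w}" by (simp add: rho_v_def p)
qed


context ocbg begin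

lemma G_facts: "mgraph GV GE Gg" "bipartite GV GE Gg" "cubic GV GE Gg"
  using cbg_unfold[OF G_cbg] by auto

lemma G_no_refl: "\<not> lam_matchable GV GE Gg w w"
  using cbg.lam_not_refl[OF G_cbg] lam_iff by metis

lemma finGV: "finite GV" using G_facts(1) by (simp add: mgraph_def)

lemma cardL1:
  "card {(p, q). lam_matchable GV GE Gg p q}
     = card {(a, b). lam_matchable V E ends a b \<and> a \<in> X \<and> b \<in> X} + 2 * card {w. lam_matchable GV GE Gg None w}"
proof -
  define LXX where "LXX = {(a, b). lam_matchable V E ends a b \<and> a \<in> X \<and> b \<in> X}"
  define N1 where "N1 = {w. lam_matchable GV GE Gg None w}"
  define S where "S = map_prod Some Some ` LXX"
  define T1 where "T1 = {None::'v option} \<times> N1"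
  define T2 where "T2 = (\<lambda>w. (w, None::'v option)) ` N1"
  have symG: "lam_matchable GV GE Gg p q \<longleftrightarrow> lam_matchable GV GE Gg q p" for p q using lam_sym by metis
  have eq: "{(p, q). lam_matchable GV GE Gg p q} = S \<union> T1 \<union> T2"
  proof (intro set_eqI iffI)
    fix x assume "x \<in> {(p, q). lam_matchable GV GE Gg p q}"
    then obtain p q where x: "x = (p, q)" and l: "lam_matchable GV GE Gg p q" by blast
    show "x \<in> S \<union> T1 \<union> T2"
    proof (cases p)
      case None
      thus ?thesis using x l by (auto simp: T1_def N1_def)
    next
      case (Some a)
      show ?thesis
      proof (cases q)
        case None
        hence "q = None" .
        hence "p \<in> N1" using l symG by (auto simp: N1_def)
        thus ?thesis using x \<open>q = None\<close> by (auto simp: T2_def)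
      next
        case (Some b)
        obtain F1 where "lamF GV GE Gg (Some a) (Some b) F1" using l \<open>p = Some a\<close> Some lam_iff by metis
        from lam_G_in_in[OF this] have "a \<in> X" "b \<in> X" "lam_matchable V E ends a b" using lam_iff by metis+
        hence "(a, b) \<in> LXX" by (simp add: LXX_def)
        hence "map_prod Some Some (a, b) \<in> S" unfolding S_def by blast
        thus ?thesis using x \<open>p = Some a\<close> Some by simp
      qed
    qed
  next
    fix x assume x: "x \<in> S \<union> T1 \<union> T2"
    show "x \<in> {(p, q). lam_matchable GV GE Gg p q}"
    proof -
      { assume "x \<in> S"
        then obtain a b where ab: "x = (Some a, Some b)" "(a, b) \<in> LXX" by (auto simp: S_def)
        hence h: "lam_matchable V E ends a b" "a \<in> X" "b \<in> X" by (auto simp: LXX_def)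
        then obtain F where "lamF V E ends a b F" using lam_iff by metis
        from lam_in_in[OF this h(2,3)] have "lam_matchable GV GE Gg (Some a) (Some b)" using lam_iff by metis
        hence ?thesis using ab by simp }
      moreover
      { assume "x \<in> T1" hence ?thesis by (auto simp: T1_def N1_def) }
      moreover
      { assume "x \<in> T2" hence ?thesis using symG by (auto simp: T2_def N1_def) }
      ultimately show ?thesis using x by blast
    qed
  qed
  have noneN: "None \<notin> N1" using G_no_refl by (simp add: N1_def)
  have d1: "S \<inter> T1 = {}" by (auto simp: S_def T1_def)
  have d2: "(S \<union> T1) \<inter> T2 = {}" using noneN by (auto simp: S_def T1_def T2_def)
  have "LXX \<subseteq> V \<times> V" by (auto simp: LXX_def lam_matchable_def)
  hence finL: "finite LXX" using finV finite_subset by blast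
  have "N1 \<subseteq> GV" by (auto simp: N1_def lam_matchable_def)
  hence finN: "finite N1" using finGV finite_subset by blast
  have finS: "finite S" "finite T1" "finite T2" using finL finN by (auto simp: S_def T1_def T2_def)
  have cS: "card S = card LXX" unfolding S_def by (rule card_image) (auto simp: inj_on_def)
  have cT1: "card T1 = card N1" by (simp add: T1_def card_cartesian_product)
  have cT2: "card T2 = card N1" unfolding T2_def by (rule card_image) (simp add: inj_on_def)
  have "card (S \<union> T1 \<union> T2) = card S + card T1 + card T2"
    using card_Un_disjoint[of "S \<union> T1" T2] card_Un_disjoint[of S T1] finS d1 d2 by simp
  thus ?thesis unfolding eq using cS cT1 cT2 by (simp add: LXX_def N1_def)
qed

lemma cross_fwd:
  assumes "lam_matchable V E ends a b" "a \<in> X" "b \<in> V - X"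
  shows "lam_matchable GV GE Gg None (Some a)"
proof -
  obtain F where "lamF V E ends a b F" using assms(1) lam_iff by metis
  from lam_in_out[OF this assms(2,3)] have "lam_matchable GV GE Gg (Some a) None" using lam_iff by metis
  thus ?thesis using lam_sym by metis
qed

lemma cross_bwd:
  assumes "lam_matchable GV GE Gg None w"
  shows "\<exists>a F1. w = Some a \<and> a \<in> X \<and> C \<subseteq> F1 \<and> F1 \<subseteq> GE \<and> deg F1 ends a = 3 \<and> (\<forall>v\<in>X - {a}. deg F1 ends v = 1)"
proof -
  have l: "lam_matchable GV GE Gg w None" using assms lam_sym by metis
  have "w \<noteq> None"
  proof
    assume "w = None" thus False using l G_no_refl[of None] by simp
  qed
  then obtain a where a: "w = Some a" by auto
  obtain F1 where "lamF GV GE Gg (Some a) None F1" using l a lam_iff by metis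
  from lam_G_in_none[OF this] show ?thesis using a by blast
qed

end

lemma (in ocbg) mk_O2: "ocbg V E ends B A (V - X)"
proof -
  interpret s: cbg V E ends B A by (rule cbg_swap)
  show ?thesis
  proof (unfold_locales)
    show "V - X \<subseteq> V" by auto
    show "tight_cut V E ends (V - X)" using tight cut_compl[OF XV] by (simp add: tight_cut_def)
    have "(V - X) \<inter> B = B - (X \<inter> B)" "(V - X) \<inter> A = A - (X \<inter> A)" using VAB by auto
    moreover have "card (B - (X \<inter> B)) = card B - card (X \<inter> B)" "card (A - (X \<inter> A)) = card A - card (X \<inter> A)"
      using finA finB by (auto simp: card_Diff_subset)
    moreover have "card (X \<inter> A) \<le> card A" "card (X \<inter> B) \<le> card B" using finA finB by (auto intro: card_mono)
    ultimately show "card ((V - X) \<inter> B) = card ((V - X) \<inter> A) + 1" using cardAB bal by simp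
    show "\<forall>e\<in>cut E ends (V - X). ends e \<inter> (V - X) \<subseteq> B"
    proof
      fix e assume e: "e \<in> cut E ends (V - X)"
      hence eC: "e \<in> C" using cut_compl[OF XV] by simp
      hence eE: "e \<in> E" using cut_sub by auto
      from cut_char[OF eE, of X] obtain x y where h: "ends e = {x, y} \<and> x \<in> A \<and> y \<in> B \<and> x \<noteq> y \<and>
        (e \<in> C \<longleftrightarrow> (x \<in> X) \<noteq> (y \<in> X))" by (elim exE)
      have "ends e \<inter> X \<subseteq> A" using ori eC by blast
      moreover have "y \<notin> A" using h ABdisj by auto
      ultimately have "y \<notin> X" using h by auto
      hence "x \<in> X" using h eC by auto
      thus "ends e \<inter> (V - X) \<subseteq> B" using h by auto
    qed
  qed
qed


lemma main_or:
  assumes O1: "ocbg V E ends A B X"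
  shows "int (rho V E ends) =
           int (rho (shrinkV V (V - X)) (shrinkE E ends (V - X)) (shrink_ends ends (V - X)))
         - int (rho_v (shrinkV V (V - X)) (shrinkE E ends (V - X)) (shrink_ends ends (V - X)) None)
         + int (rho (shrinkV V X) (shrinkE E ends X) (shrink_ends ends X))
         - int (rho_v (shrinkV V X) (shrinkE E ends X) (shrink_ends ends X) None)
         + int (rho_v (shrinkV V (V - X)) (shrinkE E ends (V - X)) (shrink_ends ends (V - X)) None)
           * int (rho_v (shrinkV V X) (shrinkE E ends X) (shrink_ends ends X) None)"
proof -
  interpret o1: ocbg V E ends A B X by (rule O1)
  interpret o2: ocbg V E ends B A "V - X" by (rule o1.mk_O2)
  have VVX: "V - (V - X) = X" using o1.XV by auto
  define V1 where "V1 = shrinkV V (V - X)"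
  define E1 where "E1 = shrinkE E ends (V - X)"
  define g1 where "g1 = shrink_ends ends (V - X)"
  define V2 where "V2 = shrinkV V X"
  define E2 where "E2 = shrinkE E ends X"
  define g2 where "g2 = shrink_ends ends X"
  define L where "L = {(a, b). lam_matchable V E ends a b}"
  define LXX where "LXX = {(a, b). lam_matchable V E ends a b \<and> a \<in> X \<and> b \<in> X}"
  define LYY where "LYY = {(a, b). lam_matchable V E ends a b \<and> a \<in> V - X \<and> b \<in> V - X}"
  define LXY where "LXY = {(a, b). lam_matchable V E ends a b \<and> a \<in> X \<and> b \<in> V - X}"
  define LYX where "LYX = {(a, b). lam_matchable V E ends a b \<and> a \<in> V - X \<and> b \<in> X}"
  define N1 where "N1 = {w. lam_matchable V1 E1 g1 None w}"
  define N2 where "N2 = {w. lam_matchable V2 E2 g2 None w}"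
  have c1: "card {(p, q). lam_matchable V1 E1 g1 p q} = card LXX + 2 * card N1"
    using o1.cardL1 unfolding V1_def E1_def g1_def LXX_def N1_def .
  have c2: "card {(p, q). lam_matchable V2 E2 g2 p q} = card LYY + 2 * card N2"
    using o2.cardL1 unfolding VVX V2_def E2_def g2_def LYY_def N2_def .
  have Gf1: "mgraph V1 E1 g1" "bipartite V1 E1 g1" "cubic V1 E1 g1"
    using o1.G_facts unfolding V1_def E1_def g1_def by auto
  have Gf2: "mgraph V2 E2 g2" "bipartite V2 E2 g2" "cubic V2 E2 g2"
    using o2.G_facts unfolding VVX V2_def E2_def g2_def by auto
  have Hf: "mgraph V E ends" "bipartite V E ends" "cubic V E ends"
    using cbg_unfold[OF o1.cbg_axioms] by auto
  have r: "2 * rho V E ends = card L" using rho_facts(1)[OF Hf] by (simp add: L_def)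
  have r1: "2 * rho V1 E1 g1 = card {(p, q). lam_matchable V1 E1 g1 p q}"
    "rho_v V1 E1 g1 None = card N1" using rho_facts[OF Gf1] by (auto simp: N1_def)
  have r2: "2 * rho V2 E2 g2 = card {(p, q). lam_matchable V2 E2 g2 p q}"
    "rho_v V2 E2 g2 None = card N2" using rho_facts[OF Gf2] by (auto simp: N2_def)
  have symH: "lam_matchable V E ends a b \<longleftrightarrow> lam_matchable V E ends b a" for a b using lam_sym by metis
  have img: "map_prod Some Some ` LXY = N1 \<times> N2"
  proof (intro set_eqI iffI)
    fix x assume "x \<in> map_prod Some Some ` LXY"
    then obtain a b where x: "x = (Some a, Some b)" and ab: "lam_matchable V E ends a b" "a \<in> X" "b \<in> V - X"
      by (auto simp: LXY_def)
    have "lam_matchable V1 E1 g1 None (Some a)" using o1.cross_fwd[OF ab] unfolding V1_def E1_def g1_def .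
    moreover have "lam_matchable V2 E2 g2 None (Some b)"
    proof -
      have "lam_matchable V E ends b a" using ab(1) symH by blast
      moreover have "a \<in> V - (V - X)" using ab(2) o1.XV by auto
      ultimately show ?thesis using o2.cross_fwd[of b a] ab(3) unfolding VVX V2_def E2_def g2_def by blast
    qed
    ultimately show "x \<in> N1 \<times> N2" using x by (simp add: N1_def N2_def)
  next
    fix x assume "x \<in> N1 \<times> N2"
    then obtain p q where x: "x = (p, q)" and pq: "lam_matchable V1 E1 g1 None p" "lam_matchable V2 E2 g2 None q"
      by (auto simp: N1_def N2_def)
    obtain a F1 where A1: "p = Some a" "a \<in> X" "cut E ends X \<subseteq> F1" "F1 \<subseteq> E1" "deg F1 ends a = 3"
      "\<forall>v\<in>X - {a}. deg F1 ends v = 1"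
      using o1.cross_bwd[of p] pq(1) unfolding V1_def E1_def g1_def by blast
    obtain b F2 where A2: "q = Some b" "b \<in> V - X" "cut E ends (V - X) \<subseteq> F2" "F2 \<subseteq> E2" "deg F2 ends b = 3"
      "\<forall>v\<in>(V - X) - {b}. deg F2 ends v = 1"
      using o2.cross_bwd[of q] pq(2) unfolding VVX V2_def E2_def g2_def by blast
    have cc: "cut E ends (V - X) = cut E ends X" using o1.cut_compl[OF o1.XV] .
    have F1E: "F1 \<subseteq> E" "\<forall>e\<in>F1. ends e \<inter> X \<noteq> {}" using A1(4) o1.GE_iff unfolding E1_def by auto
    have F2E: "F2 \<subseteq> E" "\<forall>e\<in>F2. ends e \<inter> (V - X) \<noteq> {}" using A2(4) o2.GE_iff unfolding VVX E2_def by auto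
    have gl1: "deg (F1 \<union> F2) ends v = deg F1 ends v" if "v \<in> X" for v
      using o1.glue(1)[OF o1.XV F1E(1) F2E(1) F1E(2) F2E(2) A1(3)] A2(3) cc that by simp
    have gl2: "deg (F1 \<union> F2) ends v = deg F2 ends v" if "v \<in> V - X" for v
      using o1.glue(2)[OF o1.XV F1E(1) F2E(1) F1E(2) F2E(2) A1(3)] A2(3) cc that by simp
    have "lamF V E ends a b (F1 \<union> F2)" unfolding lamF_def
    proof (intro conjI ballI)
      show "F1 \<union> F2 \<subseteq> E" using F1E F2E by auto
      show "a \<in> V" "b \<in> V" using A1(2) A2(2) o1.XV by auto
      show "deg (F1 \<union> F2) ends a = 3" using gl1[OF A1(2)] A1(5) by simp
      show "deg (F1 \<union> F2) ends b = 3" using gl2[OF A2(2)] A2(5) by simp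
      fix v assume v: "v \<in> V - {a, b}"
      show "deg (F1 \<union> F2) ends v = 1"
      proof (cases "v \<in> X")
        case True thus ?thesis using gl1 A1(6) v by auto
      next
        case False thus ?thesis using gl2 A2(6) v by auto
      qed
    qed
    hence "lam_matchable V E ends a b" using lam_iff by metis
    hence "(a, b) \<in> LXY" using A1(2) A2(2) by (simp add: LXY_def)
    hence "map_prod Some Some (a, b) \<in> map_prod Some Some ` LXY" by blast
    thus "x \<in> map_prod Some Some ` LXY" using x A1(1) A2(1) by simp
  qed
  have "L \<subseteq> V \<times> V" by (auto simp: L_def lam_matchable_def)
  hence finL: "finite L" using o1.finV finite_subset by blast
  have subs: "LXX \<subseteq> L" "LYY \<subseteq> L" "LXY \<subseteq> L" "LYX \<subseteq> L" by (auto simp: L_def LXX_def LYY_def LXY_def LYX_def)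
  have fins: "finite LXX" "finite LYY" "finite LXY" "finite LYX" using subs finL finite_subset by blast+
  have finN: "finite N1" "finite N2"
  proof -
    have "N1 \<subseteq> V1" "N2 \<subseteq> V2" by (auto simp: N1_def N2_def lam_matchable_def)
    moreover have "finite V1" "finite V2" using Gf1(1) Gf2(1) by (auto simp: mgraph_def)
    ultimately show "finite N1" "finite N2" using finite_subset by blast+
  qed
  have cXY: "card LXY = card N1 * card N2"
  proof -
    have "card (map_prod Some Some ` LXY) = card LXY" by (rule card_image) (auto simp: inj_on_def)
    thus ?thesis using img by (simp add: card_cartesian_product)
  qed
  have "LYX = prod.swap ` LXY" using symH by (auto simp: LYX_def LXY_def image_iff)
  hence cYX: "card LYX = card LXY" by (simp add: card_image)
  have Ldec: "L = LXX \<union> LYY \<union> LXY \<union> LYX"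
  proof (intro set_eqI iffI)
    fix x assume "x \<in> L"
    then obtain a b where x: "x = (a, b)" "lam_matchable V E ends a b" by (auto simp: L_def)
    hence "a \<in> V" "b \<in> V" by (auto simp: lam_matchable_def)
    thus "x \<in> LXX \<union> LYY \<union> LXY \<union> LYX" using x by (auto simp: LXX_def LYY_def LXY_def LYX_def)
  qed (use subs in auto)
  have d1: "LXX \<inter> LYY = {}" "(LXX \<union> LYY) \<inter> LXY = {}" "(LXX \<union> LYY \<union> LXY) \<inter> LYX = {}"
    by (auto simp: LXX_def LYY_def LXY_def LYX_def)
  have cL: "card L = card LXX + card LYY + card LXY + card LYX"
    unfolding Ldec using fins d1 by (simp add: card_Un_disjoint)
  have n: "2 * rho V E ends = card LXX + card LYY + 2 * (card N1 * card N2)"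
    using r cL cXY cYX by simp
  have e1: "2 * int (rho V E ends) = int (card LXX) + int (card LYY) + 2 * (int (card N1) * int (card N2))"
    using arg_cong[OF n, of int] by simp
  have e2: "2 * int (rho V1 E1 g1) = int (card LXX) + 2 * int (card N1)" using r1(1) c1 by simp
  have e3: "2 * int (rho V2 E2 g2) = int (card LYY) + 2 * int (card N2)" using r2(1) c2 by simp
  have "int (rho V E ends) = int (rho V1 E1 g1) - int (card N1) + int (rho V2 E2 g2) - int (card N2)
      + int (card N1) * int (card N2)" using e1 e2 e3 by linarith
  thus ?thesis using r1(2) r2(2) unfolding V1_def E1_def g1_def V2_def E2_def g2_def by simp
qed

theorem corollary2p7:
  fixes V :: "'v set" and E :: "'e set" and ends :: "'e \<Rightarrow> 'v set" and X :: "'v set"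
  assumes "mgraph V E ends" and "connected_graph V E ends" and "bipartite V E ends"
    and "cubic V E ends"
    and "X \<subseteq> V" and "tight_cut V E ends X"
  defines "V1 \<equiv> shrinkV V (V - X)" and "E1 \<equiv> shrinkE E ends (V - X)"
    and "g1 \<equiv> shrink_ends ends (V - X)"
    and "V2 \<equiv> shrinkV V X" and "E2 \<equiv> shrinkE E ends X"
    and "g2 \<equiv> shrink_ends ends X"
  shows "int (rho V E ends) =
           int (rho V1 E1 g1) - int (rho_v V1 E1 g1 None)
         + int (rho V2 E2 g2) - int (rho_v V2 E2 g2 None)
         + int (rho_v V1 E1 g1 None) * int (rho_v V2 E2 g2 None)"
proof -
  obtain A B where bp: "bipartition V E ends A B" using assms(3) by (auto simp: bipartite_def)
  interpret c: cbg V E ends A B using assms(1,4) bp by unfold_locales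
  have "V \<noteq> {}" using assms(2) by (simp add: connected_graph_def)
  from c.orientation[OF assms(5,6) this]
  have "ocbg V E ends A B X \<or> ocbg V E ends B A X"
  proof
    assume h: "card (X \<inter> A) = card (X \<inter> B) + 1 \<and> (\<forall>e\<in>cut E ends X. ends e \<inter> X \<subseteq> A)"
    have "ocbg V E ends A B X" using c.cbg_axioms assms(5,6) h by (simp add: ocbg_def ocbg_axioms_def)
    thus ?thesis by blast
  next
    assume h: "card (X \<inter> B) = card (X \<inter> A) + 1 \<and> (\<forall>e\<in>cut E ends X. ends e \<inter> X \<subseteq> B)"
    have "ocbg V E ends B A X" using c.cbg_swap assms(5,6) h by (simp add: ocbg_def ocbg_axioms_def)
    thus ?thesis by blast
  qed
  thus ?thesis
    unfolding V1_def E1_def g1_def V2_def E2_def g2_def using main_or by blast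
qed


end
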